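(* For $k\ge0$ let $\Delta_k$ be the path graph with $2k+1$ vertices and $2k$ edges (vertices labeled consecutively along the path), so $\Delta_0$ is a single vertex. Then, as formal power series, $$\tan x=\sum_{k=0}^{\infty}\frac{|c_{\Delta_k}|}{(2k+1)!}\,x^{2k+1}.$$
   Context: A labeled graph with $V$ vertices and $E$ edges is a map $s:\{1,\ldots,E\}\to\mathcal{P}_2\{1,\ldots,V\}$; edges $\{i,j\}$, $i<j$, are oriented $i\to j$. $c_\Gamma:=\sum_{\sigma\in S_V}\prod_{e:\,i\to j}\operatorname{sign}(\sigma(j)-\sigma(i))$ (its absolute value does not depend on the labeling). *)

theory Defs
  imports "HOL-Computational_Algebra.Formal_Power_Series" "HOL-Combinatorics.Permutations"
begin

text \<open>A labeled graph on vertices 1..V with edges given as the list es; the m-th entry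
  (i, j) of es, with i < j, is the edge {i, j} oriented i -> j.\<close>
definition graph_c :: "nat \<Rightarrow> (nat \<times> nat) list \<Rightarrow> int" where
  "graph_c V es = (\<Sum>\<sigma> | \<sigma> permutes {1..V}.
      prod_list (map (\<lambda>(i, j). sgn (int (\<sigma> j) - int (\<sigma> i))) es))"

definition path_vertices :: "nat \<Rightarrow> nat" where
  "path_vertices k = 2 * k + 1"

definition path_edges :: "nat \<Rightarrow> (nat \<times> nat) list" where
  "path_edges k = map (\<lambda>m. (m, m + 1)) [1..<2 * k + 1]"

end

theory Submission
  imports Defs "HOL-Combinatorics.Multiset_Permutations"
begin


lemma tan_ode: "fps_deriv (fps_tan (1::real)) = 1 + (fps_tan 1)^2"
proof -
  let ?C = "fps_cos (1::real)" and ?S = "fps_sin (1::real)"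
  have c0: "fps_nth ?C 0 \<noteq> 0" by (simp add: fps_cos_def)
  hence cn: "?C \<noteq> 0" by (intro notI) simp
  have c2: "?C^2 \<noteq> 0" using cn by simp
  have "fps_tan 1 * ?C = ?S" unfolding fps_tan_def using c0
    by (simp only: fps_divide_unit[OF c0] mult.assoc inverse_mult_eq_1[OF c0] mult_1_right)
  moreover have "(1 + (fps_tan 1)^2) * ?C^2 = ?C^2 + (fps_tan 1 * ?C)^2"
    by (simp only: distrib_right power_mult_distrib mult_1_left)
  ultimately have "(1 + (fps_tan 1)^2) * ?C^2 = ?C^2 + ?S^2" by simp
  also have "\<dots> = 1" using fps_sin_cos_sum_of_squares[of 1] by (simp add: add.commute)
  finally have h: "(1 + (fps_tan 1)^2) * ?C^2 = 1" .
  have "fps_deriv (fps_tan 1) = 1 / ?C^2" by (simp add: fps_tan_deriv)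
  also have "\<dots> = (1 + (fps_tan 1)^2) * ?C^2 / ?C^2" using h by simp
  also have "\<dots> = 1 + (fps_tan 1)^2" using c2 by simp
  finally show ?thesis .
qed

definition ta :: "nat \<Rightarrow> real" where "ta n = fps_nth (fps_tan 1) n * fact n"

lemma ta0: "ta 0 = 0"
proof -
  have c0: "fps_nth (fps_cos (1::real)) 0 \<noteq> 0" by simp
  show ?thesis unfolding ta_def fps_tan_def fps_divide_unit[OF c0] fps_mult_nth_0 by (simp only: fps_sin_nth_0 mult_zero_left)
qed

lemma ta_rec: "ta (Suc n) = (if n = 0 then 1 else 0) + (\<Sum>i=0..n. real (n choose i) * ta i * ta (n - i))"
proof -
  let ?t = "fps_nth (fps_tan (1::real))"
  have "fps_nth (fps_deriv (fps_tan (1::real))) n = fps_nth (1 + (fps_tan 1)^2) n" by (simp only: tan_ode)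
  hence e: "real (Suc n) * ?t (Suc n) = (if n = 0 then 1 else 0) + (\<Sum>i=0..n. ?t i * ?t (n - i))"
    by (simp only: fps_deriv_nth power2_eq_square fps_mult_nth fps_add_nth fps_one_nth) (simp add: add.commute)
  have "ta (Suc n) = fact n * (real (Suc n) * ?t (Suc n))"
    by (simp add: ta_def del: of_nat_Suc)
  also have "\<dots> = fact n * (if n = 0 then 1 else 0) + (\<Sum>i=0..n. fact n * (?t i * ?t (n - i)))"
    unfolding e by (simp add: distrib_left sum_distrib_left)
  also have "\<dots> = (if n = 0 then 1 else 0) + (\<Sum>i=0..n. real (n choose i) * ta i * ta (n - i))"
  proof -
    have "fact n * (?t i * ?t (n - i)) = real (n choose i) * ta i * ta (n - i)" if "i \<in> {0..n}" for i
    proof -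
      have "real (fact i * fact (n - i) * (n choose i)) = real (fact n)"
        using binomial_fact_lemma[of i n] that by simp
      hence "fact i * fact (n-i) * real (n choose i) = fact n" by (simp only: of_nat_mult of_nat_fact)
      then show ?thesis unfolding ta_def by (simp add: algebra_simps)
    qed
    then show ?thesis by (auto intro!: sum.cong)
  qed
  finally show ?thesis .
qed



fun wt :: "nat list \<Rightarrow> int" where
  "wt (x # y # zs) = sgn (int y - int x) * wt (y # zs)"
| "wt _ = 1"

lemma wt_Cons: "wt (y # xs) = (if xs = [] then 1 else sgn (int (hd xs) - int y) * wt xs)"
  by (cases xs) auto

lemma wt_max_Nil: "\<forall>z\<in>set zs. z < M \<Longrightarrow> wt (M # zs) = (if zs = [] then 1 else -1) * wt zs"
  by (cases zs) (auto simp: sgn_if)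

lemma wt_split:
  assumes "\<forall>y\<in>set ys. y < M" "\<forall>z\<in>set zs. z < M"
  shows "wt (ys @ M # zs) = wt ys * wt zs * (if zs = [] then 1 else -1)"
  using assms(1)
proof (induction ys)
  case Nil
  then show ?case using wt_max_Nil[OF assms(2)] by simp
next
  case (Cons y ys)
  show ?case
  proof (cases ys)
    case Nil
    then show ?thesis using wt_max_Nil[OF assms(2)] Cons.prems by (simp add: sgn_if)
  next
    case (Cons y' ys')
    then show ?thesis using Cons.IH Cons.prems by (simp add: wt_Cons)
  qed
qed

definition W :: "nat set \<Rightarrow> int" where "W A = (\<Sum>xs\<in>permutations_of_set A. wt xs)"

lemma W_split:
  assumes fin: "finite A" and ne: "A \<noteq> {}"
  defines "M \<equiv> Max A"
  defines "B \<equiv> A - {M}"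
  shows "W A = (\<Sum>S\<in>Pow B. W S * W (B - S) * (if S = B then 1 else -1))"
proof -
  have MA: "M \<in> A" using fin ne by (simp add: M_def)
  have lt: "\<forall>x\<in>B. x < M" using fin by (auto simp: B_def M_def intro: order.not_eq_order_implies_strict)
  have finB: "finite B" using fin by (simp add: B_def)
  define Sig where "Sig = Sigma (Pow B) (\<lambda>S. permutations_of_set S \<times> permutations_of_set (B - S))"
  define h where "h = (\<lambda>(S::nat set, ys, zs). ys @ M # zs)"
  have bij: "bij_betw h Sig (permutations_of_set A)"
  proof (rule bij_betw_imageI)
    show "inj_on h Sig"
    proof (rule inj_onI)
      fix p q assume p: "p \<in> Sig" and q: "q \<in> Sig" and e: "h p = h q"
      obtain S ys zs where pp: "p = (S, ys, zs)" by (cases p) auto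
      obtain S' ys' zs' where qq: "q = (S', ys', zs')" by (cases q) auto
      have "M \<notin> set ys" "M \<notin> set zs" "S = set ys" "S' = set ys'"
        using p q lt unfolding pp qq Sig_def by (auto simp: permutations_of_set_def B_def)
      moreover have "ys @ M # zs = ys' @ M # zs'" using e unfolding pp qq h_def by simp
      ultimately show "p = q" unfolding pp qq using append_Cons_eq_iff[of M ys zs ys' zs'] by auto
    qed
  next
    show "h ` Sig = permutations_of_set A"
    proof
      show "h ` Sig \<subseteq> permutations_of_set A"
      proof
        fix xs assume "xs \<in> h ` Sig"
        then obtain S ys zs where s: "S \<subseteq> B" "set ys = S" "distinct ys" "set zs = B - S" "distinct zs"
          and xs: "xs = ys @ M # zs"
          unfolding Sig_def h_def permutations_of_set_def by auto
        have "M \<notin> B" by (simp add: B_def)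
        then show "xs \<in> permutations_of_set A" using s MA unfolding xs permutations_of_set_def B_def
          by auto
      qed
    next
      show "permutations_of_set A \<subseteq> h ` Sig"
      proof
        fix xs assume xs: "xs \<in> permutations_of_set A"
        then have sx: "set xs = A" "distinct xs" by (auto simp: permutations_of_set_def)
        then obtain ys zs where e: "xs = ys @ M # zs" using MA split_list by metis
        have "(set ys, ys, zs) \<in> Sig" using sx unfolding e Sig_def B_def permutations_of_set_def
          by auto
        moreover have "xs = h (set ys, ys, zs)" by (simp add: h_def e)
        ultimately show "xs \<in> h ` Sig" by blast
      qed
    qed
  qed
  have "W A = (\<Sum>p\<in>Sig. wt (h p))"
    unfolding W_def using sum.reindex_bij_betw[OF bij, of wt] by simp
  also have "\<dots> = (\<Sum>S\<in>Pow B. \<Sum>p\<in>permutations_of_set S \<times> permutations_of_set (B - S). wt (h (S, p)))"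
    unfolding Sig_def using finB
    by (subst sum.Sigma) (auto intro!: finite_subset[OF _ finB] simp: finite_permutations_of_set)
  also have "\<dots> = (\<Sum>S\<in>Pow B. W S * W (B - S) * (if S = B then 1 else -1))"
  proof (rule sum.cong[OF refl])
    fix S assume S: "S \<in> Pow B"
    have "(\<Sum>p\<in>permutations_of_set S \<times> permutations_of_set (B - S). wt (h (S, p)))
        = (\<Sum>p\<in>permutations_of_set S \<times> permutations_of_set (B - S). wt (fst p) * wt (snd p) * (if S = B then 1 else -1))"
    proof (rule sum.cong[OF refl])
      fix p assume p: "p \<in> permutations_of_set S \<times> permutations_of_set (B - S)"
      obtain ys zs where pp: "p = (ys, zs)" by (cases p)
      have s: "set ys = S" "set zs = B - S" using p pp by (auto simp: permutations_of_set_def)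
      have z: "(zs = []) = (S = B)" using s S by auto
      have "wt (ys @ M # zs) = wt ys * wt zs * (if zs = [] then 1 else -1)"
      proof -
        have "\<forall>y\<in>set ys. y < M" "\<forall>z\<in>set zs. z < M" using s S lt by auto
        then show ?thesis by (rule wt_split)
      qed
      then show "wt (h (S, p)) = wt (fst p) * wt (snd p) * (if S = B then 1 else -1)"
        unfolding pp h_def z by simp
    qed
    also have "\<dots> = (\<Sum>p\<in>permutations_of_set S \<times> permutations_of_set (B - S). wt (fst p) * wt (snd p)) * (if S = B then 1 else -1)"
      by (rule sum_distrib_right[symmetric])
    also have "(\<Sum>p\<in>permutations_of_set S \<times> permutations_of_set (B - S). wt (fst p) * wt (snd p)) = W S * W (B - S)"
      unfolding W_def sum_product sum.cartesian_product by (simp add: case_prod_beta)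
    finally show "(\<Sum>p\<in>permutations_of_set S \<times> permutations_of_set (B - S). wt (h (S, p))) = W S * W (B - S) * (if S = B then 1 else -1)" .
  qed
  finally show ?thesis .
qed


definition Rn :: "nat \<Rightarrow> int" where "Rn n = W {..<n}"

definition Gn :: "nat \<Rightarrow> int" where
  "Gn n = (\<Sum>j\<in>{..n}. int (n choose j) * (Rn j * Rn (n - j) * (if j = n then 1 else -1)))"

lemma W_step:
  assumes fin: "finite A" and c: "card A = Suc n"
    and IH: "\<And>S. finite S \<Longrightarrow> card S \<le> n \<Longrightarrow> W S = Rn (card S)"
  shows "W A = Gn n"
proof -
  have ne: "A \<noteq> {}" using c by auto
  define B where "B = A - {Max A}"
  have finB: "finite B" using fin by (simp add: B_def)
  have cB: "card B = n" using c fin ne by (simp add: B_def)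
  let ?F = "\<lambda>j. Rn j * Rn (n - j) * (if j = n then 1 else -1)"
  have "W A = (\<Sum>S\<in>Pow B. W S * W (B - S) * (if S = B then 1 else -1))"
    unfolding B_def by (rule W_split[OF fin ne])
  also have "\<dots> = (\<Sum>S\<in>Pow B. ?F (card S))"
  proof (rule sum.cong[OF refl])
    fix S assume S: "S \<in> Pow B"
    have fS: "finite S" using S finB by (auto intro: finite_subset)
    have cS: "card S \<le> n" using S finB cB by (auto intro: card_mono)
    have cBS: "card (B - S) = n - card S" using S fS cB by (simp add: card_Diff_subset)
    have eq: "(S = B) = (card S = n)" using S finB cB by (auto dest: card_subset_eq)
    show "W S * W (B - S) * (if S = B then 1 else -1) = ?F (card S)"
      using IH[OF fS cS] IH[of "B - S"] finB cBS eq by simp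
  qed
  also have "\<dots> = (\<Sum>j\<in>{..n}. \<Sum>S\<in>{S. S \<in> Pow B \<and> card S = j}. ?F (card S))"
    by (rule sum.group[symmetric]) (use finB cB in \<open>auto intro: card_mono\<close>)
  also have "\<dots> = Gn n"
    unfolding Gn_def
  proof (rule sum.cong[OF refl])
    fix j assume j: "j \<in> {..n}"
    have "(\<Sum>S\<in>{S. S \<in> Pow B \<and> card S = j}. ?F (card S)) = (\<Sum>S\<in>{S. S \<subseteq> B \<and> card S = j}. ?F j)"
      by (rule sum.cong) auto
    also have "\<dots> = int (n choose j) * ?F j" using n_subsets[OF finB, of j] cB by simp
    finally show "(\<Sum>S\<in>{S. S \<in> Pow B \<and> card S = j}. ?F (card S)) = int (n choose j) * ?F j" .
  qed
  finally show ?thesis .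
qed

lemma W_card: "finite A \<Longrightarrow> W A = Rn (card A)"
proof (induction "card A" arbitrary: A rule: less_induct)
  case less
  show ?case
  proof (cases "card A")
    case 0
    then have "A = {}" using less.prems by simp
    then show ?thesis using 0 by (simp add: Rn_def)
  next
    case (Suc n)
    have IH: "W S = Rn (card S)" if "finite S" "card S \<le> n" for S
      using less.hyps[of S] that Suc by simp
    have "W A = Gn n" by (rule W_step[OF less.prems Suc IH])
    moreover have "W {..<Suc n} = Gn n" by (rule W_step[OF finite_lessThan card_lessThan IH])
    ultimately show ?thesis using Suc by (simp add: Rn_def)
  qed
qed

lemma Rn0: "Rn 0 = 1" by (simp add: Rn_def W_def)

lemma Rn_Suc: "Rn (Suc n) = Gn n"
  unfolding Rn_def[of "Suc n"] by (rule W_step[OF finite_lessThan card_lessThan W_card])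


lemma prod_path:
  "prod_list (map (\<lambda>(i, j). sgn (int (\<sigma> j) - int (\<sigma> i))) (map (\<lambda>m. (m, m + 1)) [a..<a+d]))
     = wt (map \<sigma> [a..<Suc (a+d)])"
proof (induction d arbitrary: a)
  case 0
  then show ?case by simp
next
  case (Suc d)
  have e1: "[a..<a + Suc d] = a # [Suc a..<Suc a + d]" by (simp add: upt_conv_Cons)
  have e2: "[a..<Suc (a + Suc d)] = a # [Suc a..<Suc (Suc a + d)]" by (simp add: upt_conv_Cons)
  have e3: "[Suc a..<Suc (Suc a + d)] = Suc a # [Suc (Suc a)..<Suc (Suc a + d)]" by (simp add: upt_conv_Cons)
  have IH: "prod_list (map (\<lambda>(i, j). sgn (int (\<sigma> j) - int (\<sigma> i))) (map (\<lambda>m. (m, m + 1)) [Suc a..<Suc a+d]))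
     = wt (\<sigma> (Suc a) # map \<sigma> [Suc (Suc a)..<Suc (Suc a + d)])"
    using Suc.IH[of "Suc a"] by (simp only: e3 list.map)
  show ?case unfolding e1 e2 e3 list.map prod_list.Cons IH by (simp only: prod.case wt.simps Suc_eq_plus1)
qed

lemma perm_list_bij:
  "bij_betw (\<lambda>\<sigma>. map \<sigma> [1..<Suc V]) {\<sigma>. \<sigma> permutes {1..V}} (permutations_of_set {1..V})"
proof (rule bij_betw_imageI)
  show "inj_on (\<lambda>\<sigma>. map \<sigma> [1..<Suc V]) {\<sigma>. \<sigma> permutes {1..V}}"
  proof (rule inj_onI)
    fix \<sigma> \<tau> assume s: "\<sigma> \<in> {\<sigma>. \<sigma> permutes {1..V}}" and t: "\<tau> \<in> {\<sigma>. \<sigma> permutes {1..V}}"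
      and e: "map \<sigma> [1..<Suc V] = map \<tau> [1..<Suc V]"
    show "\<sigma> = \<tau>"
    proof
      fix x show "\<sigma> x = \<tau> x"
      proof (cases "x \<in> {1..V}")
        case True
        then show ?thesis using e by (auto simp: map_eq_conv)
      next
        case False
        then show ?thesis using s t by (simp add: permutes_not_in)
      qed
    qed
  qed
next
  show "(\<lambda>\<sigma>. map \<sigma> [1..<Suc V]) ` {\<sigma>. \<sigma> permutes {1..V}} = permutations_of_set {1..V}"
  proof
    show "(\<lambda>\<sigma>. map \<sigma> [1..<Suc V]) ` {\<sigma>. \<sigma> permutes {1..V}} \<subseteq> permutations_of_set {1..V}"
    proof
      fix xs assume "xs \<in> (\<lambda>\<sigma>. map \<sigma> [1..<Suc V]) ` {\<sigma>. \<sigma> permutes {1..V}}"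
      then obtain \<sigma> where s: "\<sigma> permutes {1..V}" and xs: "xs = map \<sigma> [1..<Suc V]" by auto
      have st: "set [1..<Suc V] = {1..V}" by auto
      have "set xs = {1..V}" unfolding xs set_map st using permutes_image[OF s] .
      moreover have "distinct xs" unfolding xs using permutes_inj_on[OF s] by (simp add: distinct_map st del: upt_Suc)
      ultimately show "xs \<in> permutations_of_set {1..V}" by (simp add: permutations_of_set_def)
    qed
  next
    show "permutations_of_set {1..V} \<subseteq> (\<lambda>\<sigma>. map \<sigma> [1..<Suc V]) ` {\<sigma>. \<sigma> permutes {1..V}}"
    proof
      fix xs assume "xs \<in> permutations_of_set {1..V}"
      then have sx: "set xs = {1..V}" "distinct xs" by (auto simp: permutations_of_set_def)
      have len: "length xs = V" using distinct_card[OF sx(2)] sx(1) by simp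
      define \<sigma> where "\<sigma> = (\<lambda>i. if i \<in> {1..V} then xs ! (i - 1) else i)"
      have inj: "inj_on \<sigma> {1..V}"
      proof (rule inj_onI)
        fix i j assume i: "i \<in> {1..V}" and j: "j \<in> {1..V}" and e: "\<sigma> i = \<sigma> j"
        then have "xs ! (i - 1) = xs ! (j - 1)" by (simp add: \<sigma>_def)
        then have "i - 1 = j - 1" using nth_eq_iff_index_eq[OF sx(2)] i j len by auto
        then show "i = j" using i j by auto
      qed
      have img: "\<sigma> ` {1..V} = {1..V}"
      proof
        show "\<sigma> ` {1..V} \<subseteq> {1..V}"
        proof
          fix y assume "y \<in> \<sigma> ` {1..V}"
          then obtain i where i: "i \<in> {1..V}" "y = xs ! (i - 1)" by (auto simp: \<sigma>_def)
          then have "y \<in> set xs" using len by auto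
          then show "y \<in> {1..V}" using sx by simp
        qed
      next
        show "{1..V} \<subseteq> \<sigma> ` {1..V}"
        proof
          fix y assume "y \<in> {1..V}"
          then have "y \<in> set xs" using sx by simp
          then obtain k where k: "k < V" "y = xs ! k" using len by (auto simp: in_set_conv_nth)
          then have "y = \<sigma> (Suc k)" "Suc k \<in> {1..V}" by (auto simp: \<sigma>_def)
          then show "y \<in> \<sigma> ` {1..V}" by blast
        qed
      qed
      have perm: "\<sigma> permutes {1..V}"
      proof (rule bij_imp_permutes)
        show "bij_betw \<sigma> {1..V} {1..V}" using inj img by (simp add: bij_betw_def)
      next
        fix x :: nat assume "x \<notin> {1..V}" then show "\<sigma> x = x" by (auto simp: \<sigma>_def)
      qed
      have "map \<sigma> [1..<Suc V] = xs"
        by (rule nth_equalityI) (auto simp: len \<sigma>_def nth_upt simp del: upt_Suc)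
      then show "xs \<in> (\<lambda>\<sigma>. map \<sigma> [1..<Suc V]) ` {\<sigma>. \<sigma> permutes {1..V}}" using perm by blast
    qed
  qed
qed

lemma graph_c_path: "graph_c (Suc d) (map (\<lambda>m. (m, m + 1)) [1..<1+d]) = Rn (Suc d)"
proof -
  have "graph_c (Suc d) (map (\<lambda>m. (m, m + 1)) [1..<1+d])
      = (\<Sum>\<sigma> | \<sigma> permutes {1..Suc d}. wt (map \<sigma> [1..<Suc (Suc d)]))"
    unfolding graph_c_def using prod_path[of _ 1 d] by simp
  also have "\<dots> = W {1..Suc d}"
    unfolding W_def by (rule sum.reindex_bij_betw[OF perm_list_bij])
  also have "\<dots> = Rn (Suc d)" by (simp add: W_card)
  finally show ?thesis .
qed



lemma ta_nonneg: "ta n \<ge> 0"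
proof (induction n rule: less_induct)
  case (less n)
  show ?case
  proof (cases n)
    case 0 then show ?thesis by (simp add: ta0)
  next
    case (Suc m)
    have "(\<Sum>i=0..m. real (m choose i) * ta i * ta (m - i)) \<ge> 0"
      by (rule sum_nonneg) (use less Suc in auto)
    then show ?thesis unfolding Suc ta_rec by simp
  qed
qed

lemma ta_even: "even n \<Longrightarrow> ta n = 0"
proof (induction n rule: less_induct)
  case (less n)
  show ?case
  proof (cases n)
    case 0 then show ?thesis by (simp add: ta0)
  next
    case (Suc m)
    have om: "odd m" "m \<noteq> 0" using less.prems Suc by (auto simp: odd_pos)
    have "real (m choose i) * ta i * ta (m - i) = 0" if "i \<in> {0..m}" for i
    proof (cases "even i")
      case True then show ?thesis using less.IH[of i] Suc that by auto
    next
      case False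
      then have "even (m - i)" using om that by auto
      then show ?thesis using less.IH[of "m - i"] Suc that by auto
    qed
    then have "(\<Sum>i=0..m. real (m choose i) * ta i * ta (m - i)) = 0" by (intro sum.neutral) blast
    then show ?thesis unfolding Suc ta_rec using om by simp
  qed
qed

definition bb :: "nat \<Rightarrow> real" where
  "bb n = (if odd n then (-1) ^ ((n - 1) div 2) * ta n else 0)"

lemma bb0: "bb 0 = 0" by (simp add: bb_def)

lemma bb_rec:
  assumes "m \<noteq> 0"
  shows "bb (Suc m) = - (\<Sum>j\<in>{..m}. real (m choose j) * (bb j * bb (m - j)))"
proof (cases "even m")
  case True
  have "real (m choose j) * (bb j * bb (m - j)) = - ((-1) ^ (m div 2) * (real (m choose j) * ta j * ta (m - j)))"
    if j: "j \<in> {..m}" for j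
  proof (cases "odd j")
    case oj: True
    have omj: "odd (m - j)" using True oj j by auto
    have ex: "(j - 1) div 2 + (m - j - 1) div 2 + 1 = m div 2" using True oj omj j
      by (auto elim!: oddE evenE)
    have "((-1::real) ^ (m div 2)) = (-1) ^ ((j - 1) div 2) * (-1) ^ ((m - j - 1) div 2) * (-1)"
      unfolding ex[symmetric] power_add by simp
    then show ?thesis using oj omj unfolding bb_def by (simp add: algebra_simps)
  next
    case False
    then show ?thesis using ta_even[of j] by (simp add: bb_def)
  qed
  then have "(\<Sum>j\<in>{..m}. real (m choose j) * (bb j * bb (m - j)))
     = - ((-1) ^ (m div 2) * (\<Sum>j\<in>{..m}. real (m choose j) * ta j * ta (m - j)))"
    by (simp add: sum_negf sum_distrib_left)
  moreover have "bb (Suc m) = (-1) ^ (m div 2) * (\<Sum>j\<in>{..m}. real (m choose j) * ta j * ta (m - j))"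
    using True assms unfolding bb_def ta_rec by (simp add: atLeast0AtMost)
  ultimately show ?thesis by simp
next
  case False
  have "real (m choose j) * (bb j * bb (m - j)) = 0" if j: "j \<in> {..m}" for j
    using False j unfolding bb_def by auto
  then have "(\<Sum>j\<in>{..m}. real (m choose j) * (bb j * bb (m - j))) = 0" by (intro sum.neutral) blast
  then show ?thesis using False by (simp add: bb_def)
qed

lemma Rn_bb: "real_of_int (Rn n) = bb n + (if n = 0 then 1 else 0)"
proof (induction n rule: less_induct)
  case (less n)
  show ?case
  proof (cases n)
    case 0 then show ?thesis by (simp add: Rn0 bb0)
  next
    case (Suc m)
    show ?thesis
    proof (cases "m = 0")
      case True
      have "bb 1 = 1" using ta_rec[of 0] by (simp add: bb_def ta0)
      then show ?thesis using Suc True by (simp add: Rn_Suc Gn_def Rn0)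
    next
      case False
      have IH: "real_of_int (Rn j) = bb j + (if j = 0 then 1 else 0)" if "j \<le> m" for j
        using less.IH[of j] that Suc by simp
      have t: "real_of_int (int (m choose j) * (Rn j * Rn (m - j) * (if j = m then 1 else -1)))
          = - (real (m choose j) * (bb j * bb (m - j))) + (if j = m then bb m else 0) - (if j = 0 then bb m else 0)"
        if j: "j \<in> {..m}" for j
        using IH[of j] IH[of "m - j"] j False by (auto simp: bb0 algebra_simps)
      have "real_of_int (Rn n) = (\<Sum>j\<in>{..m}. - (real (m choose j) * (bb j * bb (m - j))) + (if j = m then bb m else 0) - (if j = 0 then bb m else 0))"
        unfolding Suc Rn_Suc Gn_def of_int_sum using t by (rule sum.cong[OF refl])
      also have "\<dots> = - (\<Sum>j\<in>{..m}. real (m choose j) * (bb j * bb (m - j)))"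
        by (simp add: sum.distrib sum_subtractf sum_negf)
      also have "\<dots> = bb n" using bb_rec[OF False] Suc by simp
      finally show ?thesis using Suc by simp
    qed
  qed
qed



theorem mainTheorem11:
  shows "fps_tan (1::real) =
    Abs_fps (\<lambda>n. if odd n
      then of_int \<bar>graph_c (path_vertices ((n - 1) div 2)) (path_edges ((n - 1) div 2))\<bar> / fact n
      else 0)"
proof (rule fps_ext)
  fix n
  have t: "fps_nth (fps_tan (1::real)) n = ta n / fact n" by (simp add: ta_def)
  show "fps_nth (fps_tan (1::real)) n = fps_nth (Abs_fps (\<lambda>n. if odd n
      then of_int \<bar>graph_c (path_vertices ((n - 1) div 2)) (path_edges ((n - 1) div 2))\<bar> / fact n
      else 0)) n"
  proof (cases "odd n")
    case True
    define k where "k = (n - 1) div 2"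
    have nk: "n = Suc (2 * k)" using True by (auto simp: k_def elim!: oddE)
    have "graph_c (path_vertices k) (path_edges k) = Rn n"
      unfolding path_vertices_def path_edges_def nk using graph_c_path[of "2 * k"] by simp
    then have "real_of_int \<bar>graph_c (path_vertices k) (path_edges k)\<bar> = \<bar>bb n\<bar>"
      using Rn_bb[of n] nk by simp
    also have "\<dots> = ta n" using True ta_nonneg[of n] by (simp add: bb_def abs_mult)
    finally show ?thesis using True t by (simp add: k_def)
  next
    case False
    then show ?thesis using t ta_even[of n] by simp
  qed
qed

end
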